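(* Let $N=n^2$ and let $\bm{y}\in\mathbb{R}^{N}$ be the vectorized observations of a directed network on $n$ nodes, indexed by ordered pairs $(i,j)$, $1\le i,j\le n$. Let $\bm{X}$ be a fixed $N\times p$ covariate matrix of full column rank, $\bm{P}_X=\bm{X}(\bm{X}^\top\bm{X})^{-1}\bm{X}^\top$, and let $\bm{A},\bm{B}$ be the $N\times n$ sender and receiver incidence matrices (the row of $\bm{A}$ for pair $(i,j)$ is the $i$-th standard basis vector of $\mathbb{R}^n$, and the row of $\bm{B}$ for pair $(i,j)$ is the $j$-th standard basis vector). Consider the continuous Restricted Network Regression model $$\bm{y}=\bm{X}\bm{\delta}+(\bm{I}-\bm{P}_X)\bm{A}\bm{a}+(\bm{I}-\bm{P}_X)\bm{B}\bm{b}+\bm{\varepsilon},$$ with flat prior $p(\bm{\delta})\propto 1$, $\bm{a}\sim N(\bm{0},\sigma_a^2\bm{I}_n)$, $\bm{b}\sim N(\bm{0},\sigma_b^2\bm{I}_n)$, $\bm{\varepsilon}\sim N(\bm{0},\sigma_\varepsilon^2\bm{I}_N)$, all mutually independent given the variance parameters, and any prior on $(\sigma_a^2,\sigma_b^2,\sigma_\varepsilon^2)$ (independent of $\bm\delta$) for which the joint posterior is proper and $\mathrm{E}[\sigma^2_\varepsilon\mid\bm{y}]<\infty$. Then the posterior distribution of $\bm{\delta}$ satisfies $$\mathrm{E}[\bm{\delta}\mid\bm{y}]=(\bm{X}^\top\bm{X})^{-1}\bm{X}^\top\bm{y},\qquad \mathrm{Var}(\bm{\delta}\mid\bm{y})=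(\bm{X}^\top\bm{X})^{-1}\,\mathrm{E}[\sigma^2_\varepsilon\mid\bm{y}].$$
   Context: $\bm{I}-\bm{P}_X$ is the orthogonal projection onto the orthogonal complement of the column space of $\bm{X}$; the random effects $\bm a$ (sender) and $\bm b$ (receiver) are thus projected to be orthogonal to the covariates. The parameters $\bm\delta$ are interpreted as unconditional regression effects. *)

theory Defs
  imports "HOL-Analysis.Analysis"
begin

definition gauss_dens :: "real \<Rightarrow> real^'k \<Rightarrow> real" where
  "gauss_dens s x = (2 * pi * s) powr (- real CARD('k) / 2) * exp (- (norm x * norm x) / (2 * s))"

definition proj_X :: "real^'p^'N \<Rightarrow> real^'N^'N" where
  "proj_X X = X ** matrix_inv (transpose X ** X) ** transpose X"

definition sender_inc :: "real^'n^('n \<times> 'n)" where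
  "sender_inc = (\<chi> ij k. if k = fst ij then 1 else 0)"

definition receiver_inc :: "real^'n^('n \<times> 'n)" where
  "receiver_inc = (\<chi> ij k. if k = snd ij then 1 else 0)"

text \<open>Unnormalised joint posterior density of (delta, a, b, (sa2, sb2, se2)) given y
  with respect to lborel (flat prior on delta) x lborel x lborel x (prior on variances).\<close>
definition rnr_post_dens ::
  "real^'p::finite^('n::finite\<times>'n) \<Rightarrow> real^('n\<times>'n) \<Rightarrow>
   (real^'p) \<times> (real^'n) \<times> (real^'n) \<times> (real \<times> real \<times> real) \<Rightarrow> real" where
  "rnr_post_dens X y z =
     (case z of (d, a, b, (sa, sb, se)) \<Rightarrow>
        gauss_dens sa a * gauss_dens sb b *
        gauss_dens se (y - X *v d - (mat 1 - proj_X X) *v (sender_inc *v a)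
                         - (mat 1 - proj_X X) *v (receiver_inc *v b)))"

definition rnr_space :: "(real \<times> real \<times> real) measure \<Rightarrow>
   ((real^'p::finite) \<times> (real^'n::finite) \<times> (real^'n) \<times> (real \<times> real \<times> real)) measure" where
  "rnr_space nu = lborel \<Otimes>\<^sub>M (lborel \<Otimes>\<^sub>M (lborel \<Otimes>\<^sub>M nu))"

definition post_E ::
  "(real \<times> real \<times> real) measure \<Rightarrow> real^'p::finite^('n::finite\<times>'n) \<Rightarrow> real^('n\<times>'n) \<Rightarrow>
   ((real^'p) \<times> (real^'n) \<times> (real^'n) \<times> (real \<times> real \<times> real) \<Rightarrow> real) \<Rightarrow> real" where
  "post_E nu X y g =
     (\<integral>z. g z * rnr_post_dens X y z \<partial>rnr_space nu) / (\<integral>z. rnr_post_dens X y z \<partial>rnr_space nu)"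

end

theory Submission
  imports Defs "HOL-Probability.Distributions"
begin

lemma xtx_inv:
  fixes X :: "real^'p::finite^'m::finite"
  assumes "rank X = CARD('p)"
  shows "(transpose X ** X) ** matrix_inv (transpose X ** X) = mat 1"
    and "matrix_inv (transpose X ** X) ** (transpose X ** X) = mat 1"
proof -
  let ?Q = "transpose X ** X"
  have injX: "inj ((*v) X)" using assms full_rank_injective by blast
  have "inj ((*v) ?Q)"
  proof (rule injI)
    fix u v assume "?Q *v u = ?Q *v v"
    then have "?Q *v (u - v) = 0" by (simp add: matrix_vector_mult_diff_distrib)
    then have "(u - v) \<bullet> (?Q *v (u - v)) = 0" by simp
    moreover have "(u - v) \<bullet> (?Q *v (u - v)) = (X *v (u - v)) \<bullet> (X *v (u - v))"
      by (metis dot_lmul_matrix matrix_vector_mul_assoc vector_transpose_matrix)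
    ultimately have "X *v (u - v) = X *v 0" by simp
    then have "u - v = 0" using injX by (metis injD matrix_vector_mult_0_right)
    then show "u = v" by simp
  qed
  then obtain B where "B ** ?Q = mat 1" using matrix_left_invertible_injective by blast
  then have "?Q ** B = mat 1 \<and> B ** ?Q = mat 1" using matrix_left_right_inverse by blast
  then have "?Q ** matrix_inv ?Q = mat 1 \<and> matrix_inv ?Q ** ?Q = mat 1"
    unfolding matrix_inv_def by (rule someI)
  then show "?Q ** matrix_inv ?Q = mat 1" "matrix_inv ?Q ** ?Q = mat 1" by auto
qed

lemma xtx_inv_sym:
  fixes X :: "real^'p::finite^'m::finite"
  assumes "rank X = CARD('p)"
  shows "transpose (matrix_inv (transpose X ** X)) = matrix_inv (transpose X ** X)"
proof -
  let ?Q = "transpose X ** X" let ?V = "matrix_inv ?Q"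
  have sQ: "transpose ?Q = ?Q" by (simp add: matrix_transpose_mul)
  have "transpose ?V ** ?Q = mat 1"
    using xtx_inv(1)[OF assms] by (metis matrix_transpose_mul sQ transpose_mat)
  then have "transpose ?V = (transpose ?V ** ?Q) ** ?V"
    by (metis matrix_mul_assoc matrix_mul_rid xtx_inv(1)[OF assms])
  then show ?thesis using \<open>transpose ?V ** ?Q = mat 1\<close> by (simp add: matrix_mul_lid)
qed

lemma gauss1_integrable:
  fixes c :: real assumes "c > 0"
  shows "integrable lborel (\<lambda>x. exp (- c * x\<^sup>2))"
proof -
  define \<sigma> where "\<sigma> = sqrt (1 / (2 * c))"
  have s2: "\<sigma>\<^sup>2 = 1 / (2 * c)" using assms by (simp add: \<sigma>_def)
  have "exp (- c * x\<^sup>2) = sqrt (2 * pi * \<sigma>\<^sup>2) * normal_density 0 \<sigma> x" for x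
    using assms by (simp add: normal_density_def s2 field_simps)
  moreover have "integrable lborel (\<lambda>x. sqrt (2 * pi * \<sigma>\<^sup>2) * normal_density 0 \<sigma> x)"
    using assms by (intro integrable_mult_right integrable_normal_density) (simp add: \<sigma>_def)
  ultimately show ?thesis by simp
qed

lemma gauss_base_integrable:
  fixes c :: real assumes "c > 0"
  shows "integrable lborel (\<lambda>x::'a::euclidean_space. exp (- c * (norm x)\<^sup>2))"
proof (rule integrableI_nonneg)
  show "(\<lambda>x::'a. exp (- c * (norm x)\<^sup>2)) \<in> borel_measurable lborel" by measurable
  show "AE x in lborel. 0 \<le> exp (- c * (norm (x::'a))\<^sup>2)" by simp
  have eq: "exp (- c * (norm x)\<^sup>2) = (\<Prod>b\<in>Basis. exp (- c * (x \<bullet> b)\<^sup>2))" for x :: 'a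
  proof -
    have "(norm x)\<^sup>2 = (\<Sum>b\<in>Basis. (x \<bullet> b)\<^sup>2)"
        by (subst power2_norm_eq_inner) (simp add: euclidean_inner[of x x] power2_eq_square)
    then have "- c * (norm x)\<^sup>2 = (\<Sum>b\<in>Basis. - c * (x \<bullet> b)\<^sup>2)"
      by (simp add: sum_distrib_left)
    then show ?thesis by (simp add: exp_sum)
  qed
  have fin: "(\<integral>\<^sup>+x. ennreal (exp (- c * x\<^sup>2)) \<partial>lborel) < \<infinity>"
    using gauss1_integrable[OF assms] by (simp add: integrable_iff_bounded)
  have "(\<integral>\<^sup>+x. ennreal (exp (- c * (norm (x::'a))\<^sup>2)) \<partial>lborel)
      = (\<integral>\<^sup>+x. (\<Prod>b\<in>Basis. ennreal (exp (- c * ((x::'a) \<bullet> b)\<^sup>2))) \<partial>lborel)"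
  proof -
    have "(\<lambda>x::'a. ennreal (exp (- c * (norm x)\<^sup>2))) = (\<lambda>x. (\<Prod>b\<in>Basis. ennreal (exp (- c * (x \<bullet> b)\<^sup>2))))"
    proof
      fix x :: 'a
      have "(\<Prod>b\<in>Basis. ennreal (exp (- c * (x \<bullet> b)\<^sup>2))) = ennreal (\<Prod>b\<in>Basis. exp (- c * (x \<bullet> b)\<^sup>2))"
        by (rule prod_ennreal) simp
      then show "ennreal (exp (- c * (norm x)\<^sup>2)) = (\<Prod>b\<in>Basis. ennreal (exp (- c * (x \<bullet> b)\<^sup>2)))"
        by (simp only: eq)
    qed
    then show ?thesis by simp
  qed
  also have "\<dots> = (\<Prod>b\<in>(Basis::'a set). (\<integral>\<^sup>+x. ennreal (exp (- c * x\<^sup>2)) \<partial>lborel))"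
    by (rule nn_integral_lborel_prod) auto
  also have "\<dots> < \<infinity>" using fin by (simp add: top.not_eq_extremum[symmetric] power_eq_top_ennreal_iff)
  finally show "(\<integral>\<^sup>+x. ennreal (exp (- c * (norm (x::'a))\<^sup>2)) \<partial>lborel) < \<infinity>" .
qed

lemma mvm_measurable[measurable]: "(\<lambda>x. (A::real^'a::finite^'b::finite) *v x) \<in> borel_measurable borel"
  by (intro borel_measurable_continuous_onI linear_continuous_on matrix_vector_mul_bounded_linear)

lemma lborel_shift:
  fixes g :: "'a::euclidean_space \<Rightarrow> real" and t :: 'a
  assumes "integrable lborel g"
  shows "integrable lborel (\<lambda>x. g (t + x))" "(\<integral>x. g (t + x) \<partial>lborel) = (\<integral>x. g x \<partial>lborel)"
proof -
  have gm: "g \<in> borel_measurable borel" using assms by (simp add: borel_measurable_integrable)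
  have pm: "(+) t \<in> measurable lborel borel" by simp
  have "integrable (distr lborel borel ((+) t)) g" using assms by (simp add: lborel_distr_plus)
  then show "integrable lborel (\<lambda>x. g (t + x))" using integrable_distr_eq[OF pm gm] by simp
  have "(\<integral>x. g x \<partial>lborel) = (\<integral>x. g x \<partial>(distr lborel borel ((+) t)))" by (simp add: lborel_distr_plus)
  also have "\<dots> = (\<integral>x. g (t + x) \<partial>lborel)" by (rule integral_distr[OF pm gm])
  finally show "(\<integral>x. g (t + x) \<partial>lborel) = (\<integral>x. g x \<partial>lborel)" by simp
qed

lemma lborel_distr_uminus_eucl: "distr lborel borel uminus = (lborel :: 'a::euclidean_space measure)"
proof -
  show ?thesis using lborel_affine[of "-1::real" "0::'a"] by (simp add: density_1)
qed

lemma lborel_reflect_integral: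
  fixes g :: "'a::euclidean_space \<Rightarrow> real"
  assumes "g \<in> borel_measurable borel"
  shows "(\<integral>x. g (- x) \<partial>lborel) = (\<integral>x. g x \<partial>lborel)"
proof -
  have pm: "uminus \<in> measurable lborel (borel::'a measure)" by simp
  have "(\<integral>x. g x \<partial>lborel) = (\<integral>x. g x \<partial>(distr lborel borel uminus))" by (simp add: lborel_distr_uminus_eucl)
  also have "\<dots> = (\<integral>x. g (- x) \<partial>lborel)" by (rule integral_distr[OF pm assms])
  finally show ?thesis by simp
qed

lemma odd_integral_zero:
  fixes g :: "'a::euclidean_space \<Rightarrow> real"
  assumes "g \<in> borel_measurable borel" "\<And>x. g (- x) = - g x"
  shows "(\<integral>x. g x \<partial>lborel) = 0"
  using lborel_reflect_integral[OF assms(1)] assms(2) by simp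

definition gf :: "real^'p::finite^'m::finite \<Rightarrow> real \<Rightarrow> real^'p \<Rightarrow> real" where
  "gf X s e = exp (- ((norm (X *v e))\<^sup>2) / (2 * s))"

lemma gf_measurable[measurable]: "gf X s \<in> borel_measurable borel"
  unfolding gf_def by measurable

lemma gf_pos: "0 < gf X s e" by (simp add: gf_def)

lemma mv_neg: "(A::real^'a::finite^'b::finite) *v (- e) = - (A *v e)"
  by (metis diff_0 matrix_vector_mult_diff_distrib matrix_vector_mult_0_right)

lemma gf_even: "gf X s (- e) = gf X s e"
  by (simp add: gf_def mv_neg)

lemma coercive:
  fixes X :: "real^'p::finite^'m::finite"
  assumes "rank X = CARD('p)"
  obtains \<mu> where "\<mu> > 0" "\<And>e. \<mu> * (norm e)\<^sup>2 \<le> (norm (X *v e))\<^sup>2"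
proof -
  let ?T = "matrix_inv (transpose X ** X) ** transpose X"
  have lin: "linear (\<lambda>z. ?T *v z)" by simp
  obtain B where B: "B > 0" "\<And>z. norm (?T *v z) \<le> B * norm z"
    using linear_bounded_pos[OF lin] by blast
  have Te: "?T *v (X *v e) = e" for e
    by (simp add: matrix_vector_mul_assoc flip: matrix_mul_assoc add: xtx_inv(2)[OF assms])
  have "norm e \<le> B * norm (X *v e)" for e using B(2)[of "X *v e"] Te[of e] by simp
  then have "(norm e)\<^sup>2 \<le> (B * norm (X *v e))\<^sup>2" for e by (simp add: power_mono)
  then have "(1 / B\<^sup>2) * (norm e)\<^sup>2 \<le> (norm (X *v e))\<^sup>2" for e
    using B(1) by (simp add: field_simps power_mult_distrib)
  then show ?thesis using B(1) by (intro that[of "1 / B\<^sup>2"]) auto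
qed

lemma gf_le:
  fixes X :: "real^'p::finite^'m::finite"
  assumes "\<mu> > 0" "\<And>e. \<mu> * (norm e)\<^sup>2 \<le> (norm (X *v e))\<^sup>2" "s > 0"
  shows "gf X s e \<le> exp (- (\<mu> / (2 * s)) * (norm e)\<^sup>2)"
proof -
  have "- ((norm (X *v e))\<^sup>2) / (2 * s) \<le> - (\<mu> / (2 * s)) * (norm e)\<^sup>2"
    using assms(2)[of e] assms(3) by (simp add: field_simps)
  then show ?thesis unfolding gf_def by simp
qed

lemma tq_exp_bound:
  fixes a t :: real assumes "a > 0" "t \<ge> 0"
  shows "t * exp (- a * t) \<le> (2 / a) * exp (- (a / 2) * t)"
proof -
  have "a * t / 2 \<le> exp (a * t / 2)" using exp_ge_add_one_self[of "a * t / 2"] by linarith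
  then have "t \<le> (2 / a) * exp (a * t / 2)" using assms by (simp add: field_simps)
  then have "t * exp (- a * t) \<le> (2 / a) * exp (a * t / 2) * exp (- a * t)"
    by (rule mult_right_mono) simp
  also have "\<dots> = (2 / a) * exp (- (a / 2) * t)"
    by (simp add: mult.assoc flip: exp_add)
  finally show ?thesis .
qed

lemma gf_poly_integrable:
  fixes X :: "real^'p::finite^'m::finite"
  assumes rk: "rank X = CARD('p)" and sp: "s > 0"
    and gm: "g \<in> borel_measurable borel" and gb: "\<And>e. \<bar>g e\<bar> \<le> A + B * (norm e)\<^sup>2"
  shows "integrable lborel (\<lambda>e. g e * gf X s e)"
proof -
  obtain \<mu> where mu: "\<mu> > 0" "\<And>e. \<mu> * (norm e)\<^sup>2 \<le> (norm (X *v e))\<^sup>2"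
    using coercive[OF rk] by blast
  define a where "a = \<mu> / (2 * s)"
  have a: "a > 0" using mu sp by (simp add: a_def)
  have gfle: "gf X s e \<le> exp (- a * (norm e)\<^sup>2)" for e
    using gf_le[OF mu sp] by (simp add: a_def)
  define w where "w e = (\<bar>A\<bar> + \<bar>B\<bar> * (2 / a)) * exp (- (a / 2) * (norm e)\<^sup>2)" for e :: "real^'p"
  have wi: "integrable lborel w"
    unfolding w_def using a by (intro integrable_mult_right gauss_base_integrable) simp
  show ?thesis
  proof (rule Bochner_Integration.integrable_bound[OF wi])
    show "(\<lambda>e. g e * gf X s e) \<in> borel_measurable lborel" using gm by simp
    show "AE e in lborel. norm (g e * gf X s e) \<le> norm (w e)"
    proof (rule AE_I2)
      fix e :: "real^'p"
      let ?t = "(norm e)\<^sup>2"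
      have g0: "0 \<le> gf X s e" using gf_pos[of X s e] by simp
      have "norm (g e * gf X s e) = \<bar>g e\<bar> * gf X s e" using g0 by (simp add: abs_mult)
      also have "\<dots> \<le> (\<bar>A\<bar> + \<bar>B\<bar> * ?t) * exp (- a * ?t)"
      proof (rule mult_mono)
        show "\<bar>g e\<bar> \<le> \<bar>A\<bar> + \<bar>B\<bar> * ?t"
          using gb[of e] by (smt (verit) abs_ge_self mult_right_mono zero_le_power2)
      qed (use gfle[of e] g0 in auto)
      also have "\<dots> = \<bar>A\<bar> * exp (- a * ?t) + \<bar>B\<bar> * (?t * exp (- a * ?t))"
        by (simp add: algebra_simps)
      also have "\<dots> \<le> \<bar>A\<bar> * exp (- (a / 2) * ?t) + \<bar>B\<bar> * ((2 / a) * exp (- (a / 2) * ?t))"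
      proof (rule add_mono)
        show "\<bar>A\<bar> * exp (- a * ?t) \<le> \<bar>A\<bar> * exp (- (a / 2) * ?t)"
          using a by (intro mult_left_mono) auto
        show "\<bar>B\<bar> * (?t * exp (- a * ?t)) \<le> \<bar>B\<bar> * ((2 / a) * exp (- (a / 2) * ?t))"
          using tq_exp_bound[OF a, of ?t] by (intro mult_left_mono) auto
      qed
      also have "\<dots> = w e" by (simp add: w_def algebra_simps)
      also have "\<dots> \<le> norm (w e)" by simp
      finally show "norm (g e * gf X s e) \<le> norm (w e)" .
    qed
  qed
qed

lemma xx_inner: "(X *v e) \<bullet> (X *v w) = e \<bullet> ((transpose X ** X) *v w)"
  for X :: "real^'p::finite^'m::finite"
proof -
  have "(X *v e) \<bullet> (X *v w) = (e v* transpose X) \<bullet> (X *v w)" by simp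
  also have "\<dots> = e \<bullet> (transpose X *v (X *v w))" by (rule dot_lmul_matrix)
  finally show ?thesis by (simp add: matrix_vector_mul_assoc)
qed

lemma QV_vec:
  fixes X :: "real^'p::finite^'m::finite"
  assumes "rank X = CARD('p)"
  shows "(transpose X ** X) *v (matrix_inv (transpose X ** X) *v u) = u"
  by (simp add: matrix_vector_mul_assoc xtx_inv(1)[OF assms])

lemma key_id:
  fixes X :: "real^'p::finite^'m::finite"
  assumes rk: "rank X = CARD('p)" and sp: "s > 0"
  shows "gf X s e * exp (\<epsilon> * (u \<bullet> e) / s)
       = exp (\<epsilon>\<^sup>2 * (u \<bullet> (matrix_inv (transpose X ** X) *v u)) / (2 * s))
         * gf X s (- (\<epsilon> *\<^sub>R (matrix_inv (transpose X ** X) *v u)) + e)"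
proof -
  let ?V = "matrix_inv (transpose X ** X)"
  let ?t = "\<epsilon> *\<^sub>R (?V *v u)"
  let ?r = "u \<bullet> (?V *v u)"
  have Xt: "X *v (- ?t + e) = X *v e - X *v ?t"
    by (simp add: matrix_vector_mult_diff_distrib[symmetric])
  have c1: "(X *v e) \<bullet> (X *v ?t) = \<epsilon> * (u \<bullet> e)"
    apply (simp only: matrix_vector_mult_scaleR inner_scaleR_right)
    apply (simp only: xx_inner QV_vec[OF rk])
    apply (simp add: inner_commute)
    done
  have c2: "(X *v ?t) \<bullet> (X *v ?t) = \<epsilon>\<^sup>2 * ?r"
    apply (simp only: matrix_vector_mult_scaleR inner_scaleR_right inner_scaleR_left)
    apply (simp only: xx_inner QV_vec[OF rk])
    apply (simp add: inner_commute power2_eq_square)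
    done
  have n: "(norm (X *v (- ?t + e)))\<^sup>2 = (norm (X *v e))\<^sup>2 - 2 * (\<epsilon> * (u \<bullet> e)) + \<epsilon>\<^sup>2 * ?r"
  proof -
    have "(a - b) \<bullet> (a - b) = a \<bullet> a - 2 * (a \<bullet> b) + b \<bullet> b" for a b :: "real^'m"
      by (simp add: inner_diff_left inner_diff_right inner_commute)
    then have h: "(X *v e - X *v ?t) \<bullet> (X *v e - X *v ?t) = (X *v e) \<bullet> (X *v e) - 2 * ((X *v e) \<bullet> (X *v ?t)) + (X *v ?t) \<bullet> (X *v ?t)" .
    show ?thesis unfolding Xt power2_norm_eq_inner h c1 c2 by simp
  qed
  have "- ((norm (X *v (- ?t + e)))\<^sup>2) / (2 * s) + \<epsilon>\<^sup>2 * ?r / (2 * s)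
        = - ((norm (X *v e))\<^sup>2) / (2 * s) + \<epsilon> * (u \<bullet> e) / s"
    unfolding n using sp by (simp add: field_simps)
  then have "exp (\<epsilon>\<^sup>2 * ?r / (2 * s)) * exp (- ((norm (X *v (- ?t + e)))\<^sup>2) / (2 * s))
        = exp (- ((norm (X *v e))\<^sup>2) / (2 * s)) * exp (\<epsilon> * (u \<bullet> e) / s)"
    by (simp flip: exp_add add: add.commute)
  then show ?thesis unfolding gf_def by simp
qed

lemma inner_poly_bound: "\<bar>c + u \<bullet> e\<bar> \<le> (\<bar>c\<bar> + norm u) + norm u * (norm e)\<^sup>2"
  for u e :: "'a::real_inner"
proof -
  have "\<bar>u \<bullet> e\<bar> \<le> norm u * norm e" by (rule Cauchy_Schwarz_ineq2)
  also have "\<dots> \<le> norm u * (1 + (norm e)\<^sup>2)"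
  proof (intro mult_left_mono)
    have "0 \<le> (norm e - 1)\<^sup>2" by simp
    then have "2 * norm e \<le> 1 + (norm e)\<^sup>2" by (simp add: power2_eq_square algebra_simps)
    then show "norm e \<le> 1 + (norm e)\<^sup>2" using norm_ge_zero[of e] by linarith
  qed simp
  finally have A: "\<bar>u \<bullet> e\<bar> \<le> norm u * (1 + (norm e)\<^sup>2)" .
  have B: "norm u * (1 + (norm e)\<^sup>2) = norm u + norm u * (norm e)\<^sup>2" by (simp add: algebra_simps)
  show ?thesis using A B abs_triangle_ineq[of c "u \<bullet> e"] by linarith
qed

lemma gf_integrable:
  fixes X :: "real^'p::finite^'m::finite"
  assumes rk: "rank X = CARD('p)" and sp: "s > 0"
  shows "integrable lborel (gf X s)"
  using gf_poly_integrable[OF rk sp, of "\<lambda>_. 1" 1 0] by simp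

lemma gf_lin_integrable:
  fixes X :: "real^'p::finite^'m::finite"
  assumes rk: "rank X = CARD('p)" and sp: "s > 0"
  shows "integrable lborel (\<lambda>e. (c + u \<bullet> e) * gf X s e)"
  by (rule gf_poly_integrable[OF rk sp _ inner_poly_bound]) simp

lemma gf_quad_integrable:
  fixes X :: "real^'p::finite^'m::finite"
  assumes rk: "rank X = CARD('p)" and sp: "s > 0"
  shows "integrable lborel (\<lambda>e. (u \<bullet> e) * (w \<bullet> e) * gf X s e)"
proof (rule gf_poly_integrable[OF rk sp])
  show "(\<lambda>e. (u \<bullet> e) * (w \<bullet> e)) \<in> borel_measurable borel" by simp
  fix e :: "real^'p"
  have "\<bar>(u \<bullet> e) * (w \<bullet> e)\<bar> \<le> (norm u * norm e) * (norm w * norm e)"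
    unfolding abs_mult by (intro mult_mono Cauchy_Schwarz_ineq2) auto
  also have "\<dots> = 0 + (norm u * norm w) * (norm e)\<^sup>2" by (simp add: power2_eq_square algebra_simps)
  finally show "\<bar>(u \<bullet> e) * (w \<bullet> e)\<bar> \<le> 0 + (norm u * norm w) * (norm e)\<^sup>2" .
qed

lemma gf_mgf_integrable:
  fixes X :: "real^'p::finite^'m::finite"
  assumes rk: "rank X = CARD('p)" and sp: "s > 0"
  shows "integrable lborel (\<lambda>e. gf X s e * exp (\<epsilon> * (u \<bullet> e) / s))"
  unfolding key_id[OF rk sp]
  by (intro integrable_mult_right lborel_shift(1) gf_integrable[OF rk sp])

lemma gf_lin_mean:
  fixes X :: "real^'p::finite^'m::finite"
  shows "(\<integral>e. (u \<bullet> e) * gf X s e \<partial>lborel) = 0"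
  by (rule odd_integral_zero) (simp_all add: gf_even)

lemma gf_Z_pos:
  fixes X :: "real^'p::finite^'m::finite"
  assumes rk: "rank X = CARD('p)" and sp: "s > 0"
  shows "0 < (\<integral>e. gf X s e \<partial>lborel)"
proof -
  have "(\<integral>e. gf X s e \<partial>lborel) \<noteq> 0"
  proof
    assume "(\<integral>e. gf X s e \<partial>lborel) = 0"
    then have "AE e in lborel. gf X s e = 0"
      using integral_nonneg_eq_0_iff_AE[OF gf_integrable[OF rk sp]] gf_pos[of X s] by (simp add: less_imp_le)
    moreover have "(gf X s e = 0) = False" for e using gf_pos[of X s e] by simp
    ultimately have "AE e::real^'p in lborel. False" by simp
    then have "ae_filter (lborel::(real^'p) measure) = bot" by (simp add: eventually_False)
    then show False by (simp add: ae_filter_eq_bot_iff)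
  qed
  moreover have "0 \<le> (\<integral>e. gf X s e \<partial>lborel)" by (intro integral_nonneg_AE) (simp add: gf_pos less_imp_le)
  ultimately show ?thesis by simp
qed

lemma exp_m1_bound: "\<bar>exp y - 1\<bar> \<le> \<bar>y\<bar> * exp \<bar>y\<bar>" for y :: real
proof (cases "y \<ge> 0")
  case True
  have "1 + (- y) \<le> exp (- y)" by (rule exp_ge_add_one_self)
  then have "(1 - y) * exp y \<le> exp (- y) * exp y" by (intro mult_right_mono) auto
  then have "exp y - y * exp y \<le> 1" by (simp add: algebra_simps flip: exp_add)
  then show ?thesis using True by simp
next
  case False
  have a: "1 + y \<le> exp y" by (rule exp_ge_add_one_self)
  have "1 \<le> exp \<bar>y\<bar>" by simp
  then have b: "\<bar>y\<bar> \<le> \<bar>y\<bar> * exp \<bar>y\<bar>" by (simp add: mult_le_cancel_left1)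
  have "exp y < 1" using False by simp
  then have "\<bar>exp y - 1\<bar> = 1 - exp y" by simp
  moreover have "\<bar>y\<bar> = - y" using False by simp
  ultimately show ?thesis using a b by linarith
qed

lemma sq_exp_bound: "z\<^sup>2 \<le> 4 * exp \<bar>z\<bar>" for z :: real
proof -
  have "\<bar>z\<bar> / 2 \<le> exp (\<bar>z\<bar> / 2)" using exp_ge_add_one_self[of "\<bar>z\<bar> / 2"] by linarith
  then have "(\<bar>z\<bar> / 2)\<^sup>2 \<le> (exp (\<bar>z\<bar> / 2))\<^sup>2" by (intro power_mono) auto
  also have "(exp (\<bar>z\<bar> / 2))\<^sup>2 = exp \<bar>z\<bar>" by (simp add: power2_eq_square flip: exp_add)
  finally show ?thesis by (simp add: power_divide)
qed

lemma dq_bound: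
  fixes x G s \<epsilon> :: real
  assumes "s > 0" "0 < \<epsilon>" "\<epsilon> \<le> 1" "G \<ge> 0"
  shows "\<bar>x * G * ((exp (\<epsilon> * x / s) - 1) / \<epsilon>)\<bar> \<le> 4 * s * (G * exp (2 * x / s) + G * exp ((-2) * x / s))"
proof -
  define z where "z = x / s"
  have xz: "x = s * z" using assms(1) by (simp add: z_def)
  have e1: "\<bar>exp (\<epsilon> * x / s) - 1\<bar> \<le> \<epsilon> * \<bar>z\<bar> * exp \<bar>z\<bar>"
  proof -
    have "\<bar>exp (\<epsilon> * z) - 1\<bar> \<le> \<bar>\<epsilon> * z\<bar> * exp \<bar>\<epsilon> * z\<bar>" by (rule exp_m1_bound)
    also have "\<dots> \<le> \<epsilon> * \<bar>z\<bar> * exp \<bar>z\<bar>"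
    proof (rule mult_mono)
      show "exp \<bar>\<epsilon> * z\<bar> \<le> exp \<bar>z\<bar>"
        using assms(2,3) by (simp add: abs_mult mult_left_le_one_le)
    qed (use assms in \<open>auto simp: abs_mult\<close>)
    finally show ?thesis by (simp add: z_def)
  qed
  have "\<bar>x * G * ((exp (\<epsilon> * x / s) - 1) / \<epsilon>)\<bar> = \<bar>x\<bar> * G * \<bar>exp (\<epsilon> * x / s) - 1\<bar> / \<epsilon>"
    using assms by (simp add: abs_mult)
  also have "\<dots> \<le> \<bar>x\<bar> * G * (\<epsilon> * \<bar>z\<bar> * exp \<bar>z\<bar>) / \<epsilon>"
    using assms e1 by (intro divide_right_mono mult_left_mono) auto
  also have "\<dots> = s * G * (z\<^sup>2 * exp \<bar>z\<bar>)"
    using assms by (simp add: xz abs_mult power2_eq_square)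
  also have "\<dots> \<le> s * G * (4 * exp \<bar>z\<bar> * exp \<bar>z\<bar>)"
    using assms sq_exp_bound[of z] by (intro mult_left_mono mult_right_mono) auto
  also have "4 * exp \<bar>z\<bar> * exp \<bar>z\<bar> = 4 * exp (2 * \<bar>z\<bar>)" by (simp flip: exp_add)
  also have "exp (2 * \<bar>z\<bar>) \<le> exp (2 * x / s) + exp ((-2) * x / s)"
    by (cases "z \<ge> 0") (auto simp: z_def abs_if)
  then have "s * G * (4 * exp (2 * \<bar>z\<bar>)) \<le> s * G * (4 * (exp (2 * x / s) + exp ((-2) * x / s)))"
    using assms by (intro mult_left_mono) auto
  finally show ?thesis by (simp add: algebra_simps)
qed

lemma lim_diffq: "(\<lambda>n. (exp (inverse (real (Suc n)) * c) - 1) / inverse (real (Suc n))) \<longlonglongrightarrow> c"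
proof -
  have "((\<lambda>h. exp (h * c)) has_field_derivative c) (at 0)"
    by (auto intro!: derivative_eq_intros)
  then have "((\<lambda>h. (exp ((0 + h) * c) - exp (0 * c)) / h) \<longlongrightarrow> c) (at 0)"
    by (rule DERIV_D)
  then have "((\<lambda>h. (exp (h * c) - 1) / h) \<longlongrightarrow> c) (at 0)" by simp
  then show ?thesis
    by (rule tendsto_compose_eventually[OF _ LIMSEQ_inverse_real_of_nat]) simp
qed

lemma mgf_lin:
  fixes X :: "real^'p::finite^'m::finite"
  assumes rk: "rank X = CARD('p)" and sp: "s > 0"
  defines "V \<equiv> matrix_inv (transpose X ** X)"
  shows "integrable lborel (\<lambda>e. (u \<bullet> e) * (gf X s e * exp (\<epsilon> * (u \<bullet> e) / s)))"
    and "(\<integral>e. (u \<bullet> e) * (gf X s e * exp (\<epsilon> * (u \<bullet> e) / s)) \<partial>lborel)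
         = exp (\<epsilon>\<^sup>2 * (u \<bullet> (V *v u)) / (2 * s)) * (\<epsilon> * (u \<bullet> (V *v u))) * (\<integral>e. gf X s e \<partial>lborel)"
proof -
  let ?t = "\<epsilon> *\<^sub>R (V *v u)"
  let ?r = "u \<bullet> (V *v u)"
  let ?E = "exp (\<epsilon>\<^sup>2 * ?r / (2 * s))"
  define g where "g e = (u \<bullet> ?t + u \<bullet> e) * gf X s e" for e
  have gi: "integrable lborel g" unfolding g_def by (rule gf_lin_integrable[OF rk sp])
  have eq: "(u \<bullet> e) * (gf X s e * exp (\<epsilon> * (u \<bullet> e) / s)) = ?E * g (- ?t + e)" for e
    unfolding key_id[OF rk sp] g_def V_def by (simp add: inner_add_right inner_minus_right inner_diff_right)
  show "integrable lborel (\<lambda>e. (u \<bullet> e) * (gf X s e * exp (\<epsilon> * (u \<bullet> e) / s)))"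
    unfolding eq by (intro integrable_mult_right lborel_shift(1) gi)
  have "(\<integral>e. (u \<bullet> e) * (gf X s e * exp (\<epsilon> * (u \<bullet> e) / s)) \<partial>lborel) = ?E * (\<integral>e. g (- ?t + e) \<partial>lborel)"
    unfolding eq by simp
  also have "(\<integral>e. g (- ?t + e) \<partial>lborel) = (\<integral>e. g e \<partial>lborel)" by (rule lborel_shift(2)[OF gi])
  also have "(\<integral>e. g e \<partial>lborel) = (\<integral>e. (u \<bullet> ?t) * gf X s e + (u \<bullet> e) * gf X s e \<partial>lborel)"
    unfolding g_def by (simp add: algebra_simps)
  also have "\<dots> = (u \<bullet> ?t) * (\<integral>e. gf X s e \<partial>lborel) + (\<integral>e. (u \<bullet> e) * gf X s e \<partial>lborel)"
    using gf_integrable[OF rk sp] gf_lin_integrable[OF rk sp, of 0 u] by simp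
  also have "\<dots> = (\<epsilon> * ?r) * (\<integral>e. gf X s e \<partial>lborel)" by (simp add: gf_lin_mean)
  finally show "(\<integral>e. (u \<bullet> e) * (gf X s e * exp (\<epsilon> * (u \<bullet> e) / s)) \<partial>lborel)
         = ?E * (\<epsilon> * ?r) * (\<integral>e. gf X s e \<partial>lborel)" by simp
qed

lemma gf_second_moment:
  fixes X :: "real^'p::finite^'m::finite"
  assumes rk: "rank X = CARD('p)" and sp: "s > 0"
  defines "V \<equiv> matrix_inv (transpose X ** X)"
  shows "(\<integral>e. (u \<bullet> e) * (u \<bullet> e) * gf X s e \<partial>lborel) = s * (u \<bullet> (V *v u)) * (\<integral>e. gf X s e \<partial>lborel)"
proof -
  let ?r = "u \<bullet> (V *v u)"
  let ?Z = "\<integral>e. gf X s e \<partial>lborel"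
  define \<epsilon> where "\<epsilon> n = inverse (real (Suc n))" for n
  have \<epsilon>: "0 < \<epsilon> n" "\<epsilon> n \<le> 1" for n by (auto simp: \<epsilon>_def field_simps)
  define S where "S n e = (u \<bullet> e) * gf X s e * ((exp (\<epsilon> n * (u \<bullet> e) / s) - 1) / \<epsilon> n)" for n e
  define F where "F e = (u \<bullet> e) * (u \<bullet> e) * gf X s e / s" for e
  define W where "W e = 4 * s * (gf X s e * exp (2 * (u \<bullet> e) / s) + gf X s e * exp ((-2) * (u \<bullet> e) / s))" for e
  have Sform: "S n = (\<lambda>e. ((u \<bullet> e) * (gf X s e * exp (\<epsilon> n * (u \<bullet> e) / s)) - (u \<bullet> e) * gf X s e) / \<epsilon> n)" for n
    by (auto simp: S_def algebra_simps diff_divide_distrib)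
  have intS: "(\<integral>e. S n e \<partial>lborel) = exp ((\<epsilon> n)\<^sup>2 * ?r / (2 * s)) * ?r * ?Z" for n
  proof -
    have "(\<integral>e. S n e \<partial>lborel) = ((\<integral>e. (u \<bullet> e) * (gf X s e * exp (\<epsilon> n * (u \<bullet> e) / s)) \<partial>lborel)
             - (\<integral>e. (u \<bullet> e) * gf X s e \<partial>lborel)) / \<epsilon> n"
      unfolding Sform using mgf_lin(1)[OF rk sp] gf_lin_integrable[OF rk sp, of 0 u] by simp
    also have "\<dots> = exp ((\<epsilon> n)\<^sup>2 * ?r / (2 * s)) * ?r * ?Z"
      using \<epsilon>[of n] by (simp add: mgf_lin(2)[OF rk sp] gf_lin_mean V_def)
    finally show ?thesis .
  qed
  have lim1: "(\<lambda>n. \<integral>e. S n e \<partial>lborel) \<longlonglongrightarrow> ?r * ?Z"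
  proof -
    have e0: "\<epsilon> \<longlonglongrightarrow> 0" unfolding \<epsilon>_def by (rule LIMSEQ_inverse_real_of_nat)
    have "(\<lambda>n. exp ((\<epsilon> n)\<^sup>2 * ?r / (2 * s)) * ?r * ?Z) \<longlonglongrightarrow> exp (0\<^sup>2 * ?r / (2 * s)) * ?r * ?Z"
      using sp by (intro tendsto_intros e0) auto
    then show ?thesis unfolding intS by simp
  qed
  have lim2: "(\<lambda>n. \<integral>e. S n e \<partial>lborel) \<longlonglongrightarrow> (\<integral>e. F e \<partial>lborel)"
  proof (rule integral_dominated_convergence[where w = W])
    show "F \<in> borel_measurable lborel" unfolding F_def by simp
    show "S n \<in> borel_measurable lborel" for n unfolding S_def by simp
    show "integrable lborel W" unfolding W_def
      by (rule Bochner_Integration.integrable_mult_right, rule Bochner_Integration.integrable_add, rule gf_mgf_integrable[OF rk sp], rule gf_mgf_integrable[OF rk sp])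
    show "AE e in lborel. (\<lambda>n. S n e) \<longlonglongrightarrow> F e"
    proof (rule AE_I2)
      fix e :: "real^'p"
      have "(\<lambda>n. (exp (inverse (real (Suc n)) * ((u \<bullet> e) / s)) - 1) / inverse (real (Suc n))) \<longlonglongrightarrow> (u \<bullet> e) / s"
        by (rule lim_diffq)
      then have "(\<lambda>n. (u \<bullet> e) * gf X s e * ((exp (inverse (real (Suc n)) * ((u \<bullet> e) / s)) - 1) / inverse (real (Suc n))))
          \<longlonglongrightarrow> (u \<bullet> e) * gf X s e * ((u \<bullet> e) / s)"
        by (intro tendsto_mult tendsto_const)
      then show "(\<lambda>n. S n e) \<longlonglongrightarrow> F e" unfolding S_def F_def \<epsilon>_def by (simp add: ac_simps)
    qed
    show "AE e in lborel. norm (S n e) \<le> W e" for n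
    proof (rule AE_I2)
      fix e :: "real^'p"
      show "norm (S n e) \<le> W e"
        unfolding S_def W_def real_norm_def
        by (rule dq_bound[OF sp \<epsilon>(1) \<epsilon>(2)]) (simp add: gf_pos less_imp_le)
    qed
  qed
  have "(\<integral>e. F e \<partial>lborel) = ?r * ?Z" using LIMSEQ_unique[OF lim2 lim1] .
  then have "(\<integral>e. (u \<bullet> e) * (u \<bullet> e) * gf X s e \<partial>lborel) / s = ?r * ?Z"
    unfolding F_def by simp
  then show ?thesis using sp by (simp add: field_simps)
qed

lemma ax_inner: "axis k (1::real) \<bullet> e = e $ k"
  by (simp add: inner_axis')

lemma mat_axis: "(A *v axis l (1::real)) $ k = A $ k $ l"
  by (simp add: matrix_vector_mult_def axis_def if_distrib cong: if_cong)

lemma shift_c: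
  fixes X :: "real^'p::finite^'m::finite"
  assumes "integrable lborel (\<lambda>e. \<phi> (c + e) * gf X s e)"
  shows "integrable lborel (\<lambda>d. \<phi> d * gf X s (d - c))"
    and "(\<integral>d. \<phi> d * gf X s (d - c) \<partial>lborel) = (\<integral>e. \<phi> (c + e) * gf X s e \<partial>lborel)"
proof -
  have eq: "(\<lambda>d. \<phi> d * gf X s (d - c)) = (\<lambda>d. (\<lambda>e. \<phi> (c + e) * gf X s e) (- c + d))"
    by (simp add: algebra_simps)
  show "integrable lborel (\<lambda>d. \<phi> d * gf X s (d - c))"
    unfolding eq by (rule lborel_shift(1)[OF assms])
  show "(\<integral>d. \<phi> d * gf X s (d - c) \<partial>lborel) = (\<integral>e. \<phi> (c + e) * gf X s e \<partial>lborel)"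
    unfolding eq by (rule lborel_shift(2)[OF assms])
qed

lemma gf_cross_moment:
  fixes X :: "real^'p::finite^'m::finite"
  assumes rk: "rank X = CARD('p)" and sp: "s > 0"
  shows "(\<integral>e. e $ k * e $ l * gf X s e \<partial>lborel)
         = s * matrix_inv (transpose X ** X) $ k $ l * (\<integral>e. gf X s e \<partial>lborel)"
proof -
  let ?V = "matrix_inv (transpose X ** X)"
  let ?Z = "\<integral>e. gf X s e \<partial>lborel"
  let ?a = "axis k (1::real)" let ?b = "axis l (1::real)" let ?c = "?a + ?b"
  have sym: "?V $ l $ k = ?V $ k $ l"
    using xtx_inv_sym[OF rk] by (metis transpose_def vec_lambda_beta)
  have pt: "e $ k * e $ l * gf X s e = ((?c \<bullet> e) * (?c \<bullet> e) * gf X s e - (?a \<bullet> e) * (?a \<bullet> e) * gf X s e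
               - (?b \<bullet> e) * (?b \<bullet> e) * gf X s e) / 2" for e
    by (simp add: inner_add_left ax_inner algebra_simps)
  have "(\<integral>e. e $ k * e $ l * gf X s e \<partial>lborel)
      = ((\<integral>e. (?c \<bullet> e) * (?c \<bullet> e) * gf X s e \<partial>lborel) - (\<integral>e. (?a \<bullet> e) * (?a \<bullet> e) * gf X s e \<partial>lborel)
         - (\<integral>e. (?b \<bullet> e) * (?b \<bullet> e) * gf X s e \<partial>lborel)) / 2"
    unfolding pt using gf_quad_integrable[OF rk sp] by simp
  also have "\<dots> = s * ?Z * ((?c \<bullet> (?V *v ?c)) - (?a \<bullet> (?V *v ?a)) - (?b \<bullet> (?V *v ?b))) / 2"
    unfolding gf_second_moment[OF rk sp] by (simp add: algebra_simps)
  also have "(?c \<bullet> (?V *v ?c)) - (?a \<bullet> (?V *v ?a)) - (?b \<bullet> (?V *v ?b)) = ?V $ k $ l + ?V $ l $ k"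
    by (simp add: matrix_vector_right_distrib inner_add_left inner_add_right ax_inner mat_axis)
  finally show ?thesis using sym by simp
qed

lemma gauss_d:
  fixes X :: "real^'p::finite^'m::finite"
  assumes rk: "rank X = CARD('p)" and sp: "s > 0"
  defines "Z \<equiv> \<integral>e. gf X s e \<partial>lborel"
  shows "integrable lborel (\<lambda>d. gf X s (d - c))"
    and "(\<integral>d. gf X s (d - c) \<partial>lborel) = Z"
    and "integrable lborel (\<lambda>d. d $ k * gf X s (d - c))"
    and "(\<integral>d. d $ k * gf X s (d - c) \<partial>lborel) = c $ k * Z"
    and "integrable lborel (\<lambda>d. d $ k * d $ l * gf X s (d - c))"
    and "(\<integral>d. d $ k * d $ l * gf X s (d - c) \<partial>lborel)
         = (c $ k * c $ l + s * matrix_inv (transpose X ** X) $ k $ l) * Z"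
    and "0 < Z"
proof -
  let ?a = "axis k (1::real)" let ?b = "axis l (1::real)"
  have i0: "integrable lborel (\<lambda>e. (\<lambda>_. 1::real) (c + e) * gf X s e)"
    using gf_integrable[OF rk sp] by simp
  show "integrable lborel (\<lambda>d. gf X s (d - c))" using shift_c(1)[OF i0] by simp
  show "(\<integral>d. gf X s (d - c) \<partial>lborel) = Z" using shift_c(2)[OF i0] by (simp add: Z_def)
  have lin: "(\<lambda>e. (c + e) $ k * gf X s e) = (\<lambda>e. (c $ k + ?a \<bullet> e) * gf X s e)"
    by (simp add: ax_inner)
  have i1: "integrable lborel (\<lambda>e. (\<lambda>d. d $ k) (c + e) * gf X s e)"
    using gf_lin_integrable[OF rk sp, of "c $ k" ?a] lin by simp
  show "integrable lborel (\<lambda>d. d $ k * gf X s (d - c))" using shift_c(1)[OF i1] by simp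
  have "(\<integral>d. d $ k * gf X s (d - c) \<partial>lborel) = (\<integral>e. (c $ k + ?a \<bullet> e) * gf X s e \<partial>lborel)"
    using shift_c(2)[OF i1] lin by simp
  also have "\<dots> = (\<integral>e. c $ k * gf X s e + (?a \<bullet> e) * gf X s e \<partial>lborel)" by (simp add: algebra_simps)
  also have "\<dots> = c $ k * Z"
    using gf_integrable[OF rk sp] gf_lin_integrable[OF rk sp, of 0 ?a] by (simp add: gf_lin_mean Z_def)
  finally show "(\<integral>d. d $ k * gf X s (d - c) \<partial>lborel) = c $ k * Z" .
  have quad: "(c + e) $ k * (c + e) $ l * gf X s e
     = c $ k * c $ l * gf X s e + c $ k * ((?b \<bullet> e) * gf X s e) + c $ l * ((?a \<bullet> e) * gf X s e)
       + e $ k * e $ l * gf X s e" for e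
    by (simp add: ax_inner algebra_simps)
  have iq: "integrable lborel (\<lambda>e. e $ k * e $ l * gf X s e)"
    using gf_quad_integrable[OF rk sp, of ?a ?b] by (simp add: ax_inner)
  have ib: "integrable lborel (\<lambda>e. (?b \<bullet> e) * gf X s e)" using gf_lin_integrable[OF rk sp, of 0 ?b] by simp
  have ia: "integrable lborel (\<lambda>e. (?a \<bullet> e) * gf X s e)" using gf_lin_integrable[OF rk sp, of 0 ?a] by simp
  have i2: "integrable lborel (\<lambda>e. (\<lambda>d. d $ k * d $ l) (c + e) * gf X s e)"
    unfolding quad using gf_integrable[OF rk sp] iq ia ib by simp
  show "integrable lborel (\<lambda>d. d $ k * d $ l * gf X s (d - c))" using shift_c(1)[OF i2] by simp
  have "(\<integral>d. d $ k * d $ l * gf X s (d - c) \<partial>lborel) = (\<integral>e. (c + e) $ k * (c + e) $ l * gf X s e \<partial>lborel)"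
    using shift_c(2)[OF i2] by simp
  also have "\<dots> = c $ k * c $ l * Z + c $ k * 0 + c $ l * 0 + s * matrix_inv (transpose X ** X) $ k $ l * Z"
    unfolding quad using gf_integrable[OF rk sp] iq ia ib
    by (simp add: gf_lin_mean gf_cross_moment[OF rk sp] Z_def)
  finally show "(\<integral>d. d $ k * d $ l * gf X s (d - c) \<partial>lborel)
         = (c $ k * c $ l + s * matrix_inv (transpose X ** X) $ k $ l) * Z" by (simp add: algebra_simps)
  show "0 < Z" unfolding Z_def by (rule gf_Z_pos[OF rk sp])
qed

definition Gw :: "real^'p::finite^('n::finite\<times>'n) \<Rightarrow> real^('n\<times>'n) \<Rightarrow>
   (real^'n) \<times> (real^'n) \<times> (real \<times> real \<times> real) \<Rightarrow> real" where
  "Gw X y w = (case w of (a, b, (sa, sb, se)) \<Rightarrow>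
     gauss_dens sa a * gauss_dens sb b * (2 * pi * se) powr (- real CARD('n\<times>'n) / 2)
     * exp (- ((norm ((mat 1 - proj_X X) *v (y - sender_inc *v a - receiver_inc *v b)))\<^sup>2) / (2 * se)))"

lemma gauss_dens_nonneg: "0 \<le> gauss_dens s x"
  by (simp add: gauss_dens_def)

lemma Gw_nonneg: "0 \<le> Gw X y w"
  by (simp add: Gw_def gauss_dens_nonneg split: prod.splits)

lemma projv: "proj_X X *v w = X *v (matrix_inv (transpose X ** X) *v (transpose X *v w))"
  by (simp only: proj_X_def matrix_vector_mul_assoc matrix_mul_assoc)

lemma dens_factor:
  fixes X :: "real^'p::finite^('n::finite\<times>'n)" and y :: "real^('n\<times>'n)"
  assumes rk: "rank X = CARD('p)"
  defines "c \<equiv> matrix_inv (transpose X ** X) *v (transpose X *v y)"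
  shows "rnr_post_dens X y (d, a, b, (sa, sb, se)) = Gw X y (a, b, (sa, sb, se)) * gf X se (d - c)"
proof -
  let ?P = "proj_X X"
  let ?M = "mat 1 - proj_X X"
  let ?z = "y - sender_inc *v a - receiver_inc *v b"
  let ?r = "y - X *v d - ?M *v (sender_inc *v a) - ?M *v (receiver_inc *v b)"
  have Mv: "?M *v w = w - ?P *v w" for w by (simp add: matrix_vector_mult_diff_rdistrib)
  have Py: "?P *v y = X *v c" unfolding projv c_def ..
  have Plin: "?P *v (u - v) = ?P *v u - ?P *v v" for u v by (simp add: matrix_vector_mult_diff_distrib)
  have r: "?r = X *v (c - d) + ?M *v ?z"
    unfolding Mv Plin Py by (simp add: matrix_vector_mult_diff_distrib algebra_simps)
  have XtP: "transpose X *v (?P *v w) = transpose X *v w" for w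
    unfolding projv by (simp only: matrix_vector_mul_assoc[of "transpose X" X] QV_vec[OF rk])
  have orth: "(X *v v) \<bullet> (?M *v w) = 0" for v w
  proof -
    have "(X *v v) \<bullet> (?M *v w) = (v v* transpose X) \<bullet> (?M *v w)" by simp
    also have "\<dots> = v \<bullet> (transpose X *v (?M *v w))" by (rule dot_lmul_matrix)
    also have "transpose X *v (?M *v w) = 0" unfolding Mv matrix_vector_mult_diff_distrib XtP by simp
    finally show ?thesis by simp
  qed
  have n: "(norm ?r)\<^sup>2 = (norm (X *v (d - c)))\<^sup>2 + (norm (?M *v ?z))\<^sup>2"
  proof -
    have "(norm ?r)\<^sup>2 = (norm (X *v (c - d)))\<^sup>2 + (norm (?M *v ?z))\<^sup>2"
      unfolding r by (rule norm_add_Pythagorean) (simp add: orthogonal_def orth)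
    moreover have "norm (X *v (c - d)) = norm (X *v (d - c))"
      by (metis minus_diff_eq mv_neg norm_minus_cancel)
    ultimately show ?thesis by simp
  qed
  have e: "exp (- (norm ?r * norm ?r / (2 * se)))
      = exp (- ((norm (?M *v ?z))\<^sup>2 / (2 * se))) * exp (- ((norm (X *v (d - c)))\<^sup>2 / (2 * se)))"
    unfolding power2_eq_square[symmetric] n by (simp add: add_divide_distrib flip: exp_add)
  show ?thesis
    unfolding rnr_post_dens_def Gw_def gf_def
    using e by (simp add: gauss_dens_def[of se] card_cartesian_product)
qed

lemma vec_nth_measurable[measurable]: "(\<lambda>x::real^'a::finite. x $ k) \<in> borel_measurable borel"
  by (intro borel_measurable_continuous_onI linear_continuous_on bounded_linear_vec_nth)

lemma (in pair_sigma_finite) fub_int: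
  fixes F :: "_ \<Rightarrow> real"
  assumes Fm[measurable]: "F \<in> borel_measurable (M1 \<Otimes>\<^sub>M M2)" and Bi: "integrable M2 B"
    and ae: "AE y in M2. integrable M1 (\<lambda>x. F (x, y)) \<and> (\<integral>x. norm (F (x, y)) \<partial>M1) \<le> B y"
  shows "integrable (M1 \<Otimes>\<^sub>M M2) F"
proof (rule integrableI_bounded)
  show "F \<in> borel_measurable (M1 \<Otimes>\<^sub>M M2)" by fact
  have "(\<integral>\<^sup>+z. ennreal (norm (F z)) \<partial>(M1 \<Otimes>\<^sub>M M2)) = (\<integral>\<^sup>+y. (\<integral>\<^sup>+x. ennreal (norm (F (x, y))) \<partial>M1) \<partial>M2)"
    by (rule nn_integral_snd[symmetric]) measurable
  also have "\<dots> \<le> (\<integral>\<^sup>+y. ennreal (B y) \<partial>M2)"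
  proof (rule nn_integral_mono_AE)
    show "AE y in M2. (\<integral>\<^sup>+x. ennreal (norm (F (x, y))) \<partial>M1) \<le> ennreal (B y)"
      using ae
    proof eventually_elim
      case (elim y)
      have "(\<integral>\<^sup>+x. ennreal (norm (F (x, y))) \<partial>M1) = ennreal (\<integral>x. norm (F (x, y)) \<partial>M1)"
        using elim by (intro nn_integral_eq_integral) auto
      also have "\<dots> \<le> ennreal (B y)" using elim by (intro ennreal_leI) auto
      finally show ?case .
    qed
  qed
  also have "\<dots> \<le> (\<integral>\<^sup>+y. ennreal (norm (B y)) \<partial>M2)"
    by (intro nn_integral_mono ennreal_leI) simp
  also have "\<dots> < \<infinity>" using Bi by (simp add: integrable_iff_bounded)
  finally show "(\<integral>\<^sup>+z. ennreal (norm (F z)) \<partial>(M1 \<Otimes>\<^sub>M M2)) < \<infinity>" .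
qed

lemma (in pair_sigma_finite) fub_eq:
  fixes F :: "_ \<Rightarrow> real"
  assumes F: "integrable (M1 \<Otimes>\<^sub>M M2) F"
  shows "integrable M2 (\<lambda>y. \<integral>x. F (x, y) \<partial>M1)"
    and "(\<integral>y. (\<integral>x. F (x, y) \<partial>M1) \<partial>M2) = integral\<^sup>L (M1 \<Otimes>\<^sub>M M2) F"
    and "AE y in M2. integrable M1 (\<lambda>x. F (x, y))"
proof -
  have eq: "(\<lambda>(x, y). F (x, y)) = F" by auto
  have F': "integrable (M1 \<Otimes>\<^sub>M M2) (\<lambda>(x, y). F (x, y))" using F by (simp add: eq)
  show "integrable M2 (\<lambda>y. \<integral>x. F (x, y) \<partial>M1)" using integrable_snd[OF F'] .
  show "(\<integral>y. (\<integral>x. F (x, y) \<partial>M1) \<partial>M2) = integral\<^sup>L (M1 \<Otimes>\<^sub>M M2) F"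
    using integral_snd[OF F'] by (simp add: eq)
  show "AE y in M2. integrable M1 (\<lambda>x. F (x, y))" using AE_integrable_snd[OF F'] .
qed

lemma inner_facts:
  fixes X :: "real^'p::finite^'m::finite"
  assumes rk: "rank X = CARD('p)" and sp: "s > 0"
  defines "Z \<equiv> \<integral>e. gf X s e \<partial>lborel"
  shows "integrable lborel (\<lambda>d. G * gf X s (d - c))"
    and "(\<integral>d. G * gf X s (d - c) \<partial>lborel) = G * Z"
    and "integrable lborel (\<lambda>d. d $ k * (G * gf X s (d - c)))"
    and "(\<integral>d. d $ k * (G * gf X s (d - c)) \<partial>lborel) = c $ k * (G * Z)"
    and "integrable lborel (\<lambda>d. d $ k * d $ l * (G * gf X s (d - c)))"
    and "(\<integral>d. d $ k * d $ l * (G * gf X s (d - c)) \<partial>lborel)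
         = (c $ k * c $ l + s * matrix_inv (transpose X ** X) $ k $ l) * (G * Z)"
    and "0 < Z"
proof -
  have e1: "(\<lambda>d. d $ k * (G * gf X s (d - c))) = (\<lambda>d. G * (d $ k * gf X s (d - c)))" by (simp add: ac_simps)
  have e2: "(\<lambda>d. d $ k * d $ l * (G * gf X s (d - c))) = (\<lambda>d. G * (d $ k * d $ l * gf X s (d - c)))" by (simp add: ac_simps)
  show "integrable lborel (\<lambda>d. G * gf X s (d - c))" using gauss_d(1)[OF rk sp, of c] by simp
  show "(\<integral>d. G * gf X s (d - c) \<partial>lborel) = G * Z" using gauss_d(2)[OF rk sp, of c] by (simp add: Z_def)
  show "integrable lborel (\<lambda>d. d $ k * (G * gf X s (d - c)))" unfolding e1 using gauss_d(3)[OF rk sp, of k c] by simp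
  show "(\<integral>d. d $ k * (G * gf X s (d - c)) \<partial>lborel) = c $ k * (G * Z)" unfolding e1 using gauss_d(4)[OF rk sp, of k c] by (simp add: Z_def)
  show "integrable lborel (\<lambda>d. d $ k * d $ l * (G * gf X s (d - c)))" unfolding e2 using gauss_d(5)[OF rk sp, of k l c] by simp
  show "(\<integral>d. d $ k * d $ l * (G * gf X s (d - c)) \<partial>lborel)
         = (c $ k * c $ l + s * matrix_inv (transpose X ** X) $ k $ l) * (G * Z)"
    unfolding e2 using gauss_d(6)[OF rk sp, of k l c] by (simp add: Z_def)
  show "0 < Z" using gauss_d(7)[OF rk sp] by (simp add: Z_def)
qed

lemma abs_le_1_sq: "\<bar>x\<bar> \<le> 1 + x * x" for x :: real
proof -
  have "0 \<le> (\<bar>x\<bar> - 1)\<^sup>2" by simp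
  then have "2 * \<bar>x\<bar> \<le> 1 + x * x" by (simp add: power2_eq_square algebra_simps abs_mult_self_eq)
  then show ?thesis by linarith
qed

lemma abs_prod_le: "\<bar>x * y\<bar> \<le> x * x + y * y" for x y :: real
proof -
  have "0 \<le> (\<bar>x\<bar> - \<bar>y\<bar>)\<^sup>2" by simp
  then have "2 * \<bar>x * y\<bar> \<le> x * x + y * y" by (simp add: power2_eq_square algebra_simps abs_mult abs_mult_self_eq)
  then show ?thesis by linarith
qed

theorem theorem1:
  fixes X :: "real^'p::finite^('n::finite\<times>'n)" and y :: "real^('n\<times>'n)"
    and nu :: "(real \<times> real \<times> real) measure"
  assumes full_rank: "rank X = CARD('p)"
    and nu_sets: "sets nu = sets borel"
    and nu_sf: "sigma_finite_measure nu"
    and nu_pos: "AE \<theta> in nu. 0 < fst \<theta> \<and> 0 < fst (snd \<theta>) \<and> 0 < snd (snd \<theta>)"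
    and proper: "integrable (rnr_space nu) (rnr_post_dens X y)"
    and proper_pos: "0 < (\<integral>z. rnr_post_dens X y z \<partial>rnr_space nu)"
    and Ese_finite: "integrable (rnr_space nu)
                       (\<lambda>z. snd (snd (snd (snd (snd z)))) * rnr_post_dens X y z)"
  shows "(\<forall>k. integrable (rnr_space nu) (\<lambda>z. fst z $ k * rnr_post_dens X y z))
       \<and> (\<forall>k l. integrable (rnr_space nu) (\<lambda>z. fst z $ k * fst z $ l * rnr_post_dens X y z))
       \<and> (\<chi> k. post_E nu X y (\<lambda>z. fst z $ k))
            = matrix_inv (transpose X ** X) *v (transpose X *v y)
       \<and> (\<chi> k l. post_E nu X y (\<lambda>z. fst z $ k * fst z $ l)
                  - post_E nu X y (\<lambda>z. fst z $ k) * post_E nu X y (\<lambda>z. fst z $ l))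
            = post_E nu X y (\<lambda>z. snd (snd (snd (snd (snd z)))))
                *\<^sub>R matrix_inv (transpose X ** X)"
proof -
  define V where "V = matrix_inv (transpose X ** X)"
  define c where "c = V *v (transpose X *v y)"
  define R where "R = (lborel::(real^'n) measure) \<Otimes>\<^sub>M ((lborel::(real^'n) measure) \<Otimes>\<^sub>M nu)"
  define se where "se w = snd (snd (snd (snd w)))" for w :: "(real^'n) \<times> (real^'n) \<times> real \<times> real \<times> real"
  define D where "D = rnr_post_dens X y"
  define Zf where "Zf s = (\<integral>e. gf X s e \<partial>lborel)" for s
  have T: "rnr_space nu = (lborel::(real^'p) measure) \<Otimes>\<^sub>M R" by (simp add: rnr_space_def R_def)
  have sfR: "sigma_finite_measure R" unfolding R_def
    by (intro sigma_finite_pair_measure sigma_finite_lborel nu_sf)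
  interpret P: pair_sigma_finite "lborel::(real^'p) measure" R
    by (intro pair_sigma_finite.intro sigma_finite_lborel sfR)
  have Dfac: "D (d, w) = Gw X y w * gf X (se w) (d - c)" for d w
  proof -
    obtain a b sa sb s' where w: "w = (a, b, sa, sb, s')" by (cases w) auto
    show ?thesis unfolding w D_def se_def c_def V_def using dens_factor[OF full_rank] by simp
  qed
  have Dint: "integrable (lborel \<Otimes>\<^sub>M R) D" using proper T D_def by simp
  have Dm[measurable]: "D \<in> borel_measurable (lborel \<Otimes>\<^sub>M R)" using Dint by (rule borel_measurable_integrable)
  have Seint: "integrable (lborel \<Otimes>\<^sub>M R) (\<lambda>z. se (snd z) * D z)"
    using Ese_finite T D_def se_def by simp
  have aepos: "AE w in R. 0 < se w"
  proof -
    interpret P2: pair_sigma_finite "lborel::(real^'n) measure" nu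
      by (intro pair_sigma_finite.intro sigma_finite_lborel nu_sf)
    have sf2: "sigma_finite_measure ((lborel::(real^'n) measure) \<Otimes>\<^sub>M nu)"
      by (intro sigma_finite_pair_measure sigma_finite_lborel nu_sf)
    interpret P3: pair_sigma_finite "lborel::(real^'n) measure" "(lborel::(real^'n) measure) \<Otimes>\<^sub>M nu"
      by (intro pair_sigma_finite.intro sigma_finite_lborel sf2)
    have numeas[measurable]: "(\<lambda>\<theta>::real\<times>real\<times>real. snd (snd \<theta>)) \<in> borel_measurable nu"
    proof -
      have "(\<lambda>\<theta>::real\<times>real\<times>real. snd (snd \<theta>)) \<in> borel_measurable borel"
        by (intro borel_measurable_continuous_onI continuous_intros)
      then show ?thesis using measurable_cong_sets[OF nu_sets refl] by blast
    qed
    have ae1: "AE \<theta> in nu. 0 < snd (snd \<theta>)" using nu_pos by eventually_elim simp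
    have ae2: "AE x in (lborel::(real^'n) measure) \<Otimes>\<^sub>M nu. 0 < snd (snd (snd x))"
      by (rule P2.AE_pair_measure) (measurable, simp add: ae1)
    show ?thesis unfolding R_def se_def
      by (rule P3.AE_pair_measure) (measurable, simp add: ae2)
  qed
  define I0 where "I0 w = (\<integral>d. D (d, w) \<partial>lborel)" for w
  define Ise where "Ise w = (\<integral>d. se w * D (d, w) \<partial>lborel)" for w
  have I0i: "integrable R I0" unfolding I0_def using P.fub_eq(1)[OF Dint] by simp
  have I0e: "(\<integral>w. I0 w \<partial>R) = (\<integral>z. D z \<partial>(lborel \<Otimes>\<^sub>M R))" unfolding I0_def using P.fub_eq(2)[OF Dint] by simp
  have Isei: "integrable R Ise" unfolding Ise_def using P.fub_eq(1)[OF Seint] by simp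
  have Isee: "(\<integral>w. Ise w \<partial>R) = (\<integral>z. se (snd z) * D z \<partial>(lborel \<Otimes>\<^sub>M R))"
    unfolding Ise_def using P.fub_eq(2)[OF Seint] by simp
  have pw: "I0 w = Gw X y w * Zf (se w) \<and> Ise w = se w * (Gw X y w * Zf (se w))
     \<and> (\<forall>k. integrable lborel (\<lambda>d. d $ k * D (d, w))
           \<and> (\<integral>d. d $ k * D (d, w) \<partial>lborel) = c $ k * I0 w
           \<and> (\<integral>d. norm (d $ k * D (d, w)) \<partial>lborel) \<le> (1 + c $ k * c $ k) * I0 w + \<bar>V $ k $ k\<bar> * Ise w)
     \<and> (\<forall>k l. integrable lborel (\<lambda>d. d $ k * d $ l * D (d, w))
           \<and> (\<integral>d. d $ k * d $ l * D (d, w) \<partial>lborel) = c $ k * c $ l * I0 w + V $ k $ l * Ise w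
           \<and> (\<integral>d. norm (d $ k * d $ l * D (d, w)) \<partial>lborel)
                \<le> (c $ k * c $ k + c $ l * c $ l) * I0 w + (\<bar>V $ k $ k\<bar> + \<bar>V $ l $ l\<bar>) * Ise w)"
    if sw: "0 < se w" for w
  proof -
    let ?G = "Gw X y w" let ?s = "se w" let ?Z = "Zf (se w)"
    have G0: "0 \<le> ?G" by (rule Gw_nonneg)
    have Z0: "0 < ?Z" unfolding Zf_def by (rule inner_facts(7)[OF full_rank sw])
    have Dw: "(\<lambda>d. D (d, w)) = (\<lambda>d. ?G * gf X ?s (d - c))" using Dfac by auto
    have I0w: "I0 w = ?G * ?Z" unfolding I0_def Dfac Zf_def by (rule inner_facts(2)[OF full_rank sw])
    have Isew: "Ise w = ?s * (?G * ?Z)" unfolding Ise_def I0w[symmetric] I0_def by simp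
    have int0: "integrable lborel (\<lambda>d. D (d, w))" unfolding Dfac by (rule inner_facts(1)[OF full_rank sw])
    have int1: "integrable lborel (\<lambda>d. d $ k * D (d, w))" for k
      unfolding Dfac by (rule inner_facts(3)[OF full_rank sw])
    have e1: "(\<integral>d. d $ k * D (d, w) \<partial>lborel) = c $ k * (?G * ?Z)" for k
      unfolding Dfac Zf_def by (rule inner_facts(4)[OF full_rank sw])
    have int2: "integrable lborel (\<lambda>d. d $ k * d $ l * D (d, w))" for k l
      unfolding Dfac by (rule inner_facts(5)[OF full_rank sw])
    have e2: "(\<integral>d. d $ k * d $ l * D (d, w) \<partial>lborel) = (c $ k * c $ l + ?s * V $ k $ l) * (?G * ?Z)" for k l
      unfolding Dfac Zf_def V_def by (rule inner_facts(6)[OF full_rank sw])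
    have Dnn: "0 \<le> D (d, w)" for d unfolding Dfac using G0 gf_pos[of X ?s "d - c"] by simp
    have GZ: "0 \<le> ?G * ?Z" using G0 Z0 by simp
    have b1: "(\<integral>d. norm (d $ k * D (d, w)) \<partial>lborel) \<le> (1 + c $ k * c $ k) * I0 w + \<bar>V $ k $ k\<bar> * Ise w" for k
    proof -
      have "(\<integral>d. norm (d $ k * D (d, w)) \<partial>lborel) \<le> (\<integral>d. D (d, w) + d $ k * d $ k * D (d, w) \<partial>lborel)"
      proof (rule integral_mono)
        show "integrable lborel (\<lambda>d. norm (d $ k * D (d, w)))" using int1 by simp
        show "integrable lborel (\<lambda>d. D (d, w) + d $ k * d $ k * D (d, w))" using int0 int2 by simp
        fix d :: "real^'p"
        have "norm (d $ k * D (d, w)) = \<bar>d $ k\<bar> * D (d, w)" using Dnn[of d] by (simp add: abs_mult)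
        also have "\<dots> \<le> (1 + d $ k * d $ k) * D (d, w)" using Dnn[of d] abs_le_1_sq by (intro mult_right_mono) auto
        finally show "norm (d $ k * D (d, w)) \<le> D (d, w) + d $ k * d $ k * D (d, w)" by (simp add: algebra_simps)
      qed
      also have "\<dots> = ?G * ?Z + (c $ k * c $ k + ?s * V $ k $ k) * (?G * ?Z)"
        using int0 int2 e2 I0w unfolding I0_def by simp
      also have "\<dots> \<le> (1 + c $ k * c $ k) * (?G * ?Z) + \<bar>V $ k $ k\<bar> * (?s * (?G * ?Z))"
      proof -
        have "V $ k $ k * (?s * (?G * ?Z)) \<le> \<bar>V $ k $ k\<bar> * (?s * (?G * ?Z))"
          using sw GZ by (intro mult_right_mono abs_ge_self) simp
        then have "?s * V $ k $ k * (?G * ?Z) \<le> \<bar>V $ k $ k\<bar> * (?s * (?G * ?Z))" by (simp add: ac_simps)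
        then show ?thesis by (simp add: algebra_simps)
      qed
      finally show ?thesis using I0w Isew by simp
    qed
    have b2: "(\<integral>d. norm (d $ k * d $ l * D (d, w)) \<partial>lborel)
                \<le> (c $ k * c $ k + c $ l * c $ l) * I0 w + (\<bar>V $ k $ k\<bar> + \<bar>V $ l $ l\<bar>) * Ise w" for k l
    proof -
      have "(\<integral>d. norm (d $ k * d $ l * D (d, w)) \<partial>lborel)
          \<le> (\<integral>d. d $ k * d $ k * D (d, w) + d $ l * d $ l * D (d, w) \<partial>lborel)"
      proof (rule integral_mono)
        show "integrable lborel (\<lambda>d. norm (d $ k * d $ l * D (d, w)))" using int2 by simp
        show "integrable lborel (\<lambda>d. d $ k * d $ k * D (d, w) + d $ l * d $ l * D (d, w))" using int2 by simp
        fix d :: "real^'p"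
        have "norm (d $ k * d $ l * D (d, w)) = \<bar>d $ k * d $ l\<bar> * D (d, w)" using Dnn[of d] by (simp add: abs_mult)
        also have "\<dots> \<le> (d $ k * d $ k + d $ l * d $ l) * D (d, w)"
          using Dnn[of d] abs_prod_le by (intro mult_right_mono) auto
        finally show "norm (d $ k * d $ l * D (d, w)) \<le> d $ k * d $ k * D (d, w) + d $ l * d $ l * D (d, w)"
          by (simp add: algebra_simps)
      qed
      also have "\<dots> = (c $ k * c $ k + ?s * V $ k $ k) * (?G * ?Z) + (c $ l * c $ l + ?s * V $ l $ l) * (?G * ?Z)"
        using int2 e2 by simp
      also have "\<dots> \<le> (c $ k * c $ k + c $ l * c $ l) * (?G * ?Z) + (\<bar>V $ k $ k\<bar> + \<bar>V $ l $ l\<bar>) * (?s * (?G * ?Z))"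
      proof -
        have "V $ k $ k * (?s * (?G * ?Z)) \<le> \<bar>V $ k $ k\<bar> * (?s * (?G * ?Z))"
          using sw GZ by (intro mult_right_mono abs_ge_self) simp
        then have "?s * V $ k $ k * (?G * ?Z) \<le> \<bar>V $ k $ k\<bar> * (?s * (?G * ?Z))" by (simp add: ac_simps)
        moreover have "V $ l $ l * (?s * (?G * ?Z)) \<le> \<bar>V $ l $ l\<bar> * (?s * (?G * ?Z))"
          using sw GZ by (intro mult_right_mono abs_ge_self) simp
        then have "?s * V $ l $ l * (?G * ?Z) \<le> \<bar>V $ l $ l\<bar> * (?s * (?G * ?Z))" by (simp add: ac_simps)
        ultimately show ?thesis by (simp add: algebra_simps)
      qed
      finally show ?thesis using I0w Isew by simp
    qed
    show ?thesis
      using I0w Isew int1 e1 int2 e2 b1 b2 by (simp add: algebra_simps)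
  qed
  have aeP: "AE w in R. I0 w = Gw X y w * Zf (se w) \<and> Ise w = se w * (Gw X y w * Zf (se w))
     \<and> (\<forall>k. integrable lborel (\<lambda>d. d $ k * D (d, w))
           \<and> (\<integral>d. d $ k * D (d, w) \<partial>lborel) = c $ k * I0 w
           \<and> (\<integral>d. norm (d $ k * D (d, w)) \<partial>lborel) \<le> (1 + c $ k * c $ k) * I0 w + \<bar>V $ k $ k\<bar> * Ise w)
     \<and> (\<forall>k l. integrable lborel (\<lambda>d. d $ k * d $ l * D (d, w))
           \<and> (\<integral>d. d $ k * d $ l * D (d, w) \<partial>lborel) = c $ k * c $ l * I0 w + V $ k $ l * Ise w
           \<and> (\<integral>d. norm (d $ k * d $ l * D (d, w)) \<partial>lborel)
                \<le> (c $ k * c $ k + c $ l * c $ l) * I0 w + (\<bar>V $ k $ k\<bar> + \<bar>V $ l $ l\<bar>) * Ise w)"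
    using aepos by eventually_elim (rule pw)
  define A0 where "A0 = (\<integral>z. D z \<partial>(lborel \<Otimes>\<^sub>M R))"
  define A1 where "A1 = (\<integral>z. se (snd z) * D z \<partial>(lborel \<Otimes>\<^sub>M R))"
  have A0pos: "0 < A0" using proper_pos T D_def A0_def by simp
  have int1: "integrable (lborel \<Otimes>\<^sub>M R) (\<lambda>z. fst z $ k * D z)" for k
  proof (rule P.fub_int[where B="\<lambda>w. (1 + c $ k * c $ k) * I0 w + \<bar>V $ k $ k\<bar> * Ise w"])
    show "(\<lambda>z. fst z $ k * D z) \<in> borel_measurable (lborel \<Otimes>\<^sub>M R)" by measurable
    show "integrable R (\<lambda>w. (1 + c $ k * c $ k) * I0 w + \<bar>V $ k $ k\<bar> * Ise w)" using I0i Isei by simp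
    show "AE w in R. integrable lborel (\<lambda>d. fst (d, w) $ k * D (d, w))
        \<and> (\<integral>d. norm (fst (d, w) $ k * D (d, w)) \<partial>lborel) \<le> (1 + c $ k * c $ k) * I0 w + \<bar>V $ k $ k\<bar> * Ise w"
      using aeP apply eventually_elim apply (unfold fst_conv) apply blast done
  qed
  have int2: "integrable (lborel \<Otimes>\<^sub>M R) (\<lambda>z. fst z $ k * fst z $ l * D z)" for k l
  proof (rule P.fub_int[where B="\<lambda>w. (c $ k * c $ k + c $ l * c $ l) * I0 w + (\<bar>V $ k $ k\<bar> + \<bar>V $ l $ l\<bar>) * Ise w"])
    show "(\<lambda>z. fst z $ k * fst z $ l * D z) \<in> borel_measurable (lborel \<Otimes>\<^sub>M R)" by measurable
    show "integrable R (\<lambda>w. (c $ k * c $ k + c $ l * c $ l) * I0 w + (\<bar>V $ k $ k\<bar> + \<bar>V $ l $ l\<bar>) * Ise w)"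
      using I0i Isei by simp
    show "AE w in R. integrable lborel (\<lambda>d. fst (d, w) $ k * fst (d, w) $ l * D (d, w))
        \<and> (\<integral>d. norm (fst (d, w) $ k * fst (d, w) $ l * D (d, w)) \<partial>lborel)
           \<le> (c $ k * c $ k + c $ l * c $ l) * I0 w + (\<bar>V $ k $ k\<bar> + \<bar>V $ l $ l\<bar>) * Ise w"
      using aeP apply eventually_elim apply (unfold fst_conv) apply blast done
  qed
  have E1: "(\<integral>z. fst z $ k * D z \<partial>(lborel \<Otimes>\<^sub>M R)) = c $ k * A0" for k
  proof -
    have "(\<integral>z. fst z $ k * D z \<partial>(lborel \<Otimes>\<^sub>M R)) = (\<integral>w. (\<integral>d. fst (d, w) $ k * D (d, w) \<partial>lborel) \<partial>R)"
      using P.fub_eq(2)[OF int1] by simp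
    also have "\<dots> = (\<integral>w. c $ k * I0 w \<partial>R)"
    proof (rule integral_cong_AE)
      show "(\<lambda>w. \<integral>d. fst (d, w) $ k * D (d, w) \<partial>lborel) \<in> borel_measurable R"
        using P.fub_eq(1)[OF int1] by (rule borel_measurable_integrable)
      show "(\<lambda>w. c $ k * I0 w) \<in> borel_measurable R" using I0i by (simp add: borel_measurable_integrable)
      show "AE w in R. (\<integral>d. fst (d, w) $ k * D (d, w) \<partial>lborel) = c $ k * I0 w"
        using aeP by eventually_elim simp
    qed
    also have "\<dots> = c $ k * A0" using I0e by (simp add: A0_def)
    finally show ?thesis .
  qed
  have A1e: "A1 = (\<integral>w. se w * I0 w \<partial>R)"
  proof -
    have "A1 = (\<integral>w. Ise w \<partial>R)" using Isee by (simp add: A1_def)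
    also have "\<dots> = (\<integral>w. se w * I0 w \<partial>R)" by (simp add: Ise_def I0_def)
    finally show ?thesis .
  qed
  have E2: "(\<integral>z. fst z $ k * fst z $ l * D z \<partial>(lborel \<Otimes>\<^sub>M R)) = c $ k * c $ l * A0 + V $ k $ l * A1" for k l
  proof -
    have "(\<integral>z. fst z $ k * fst z $ l * D z \<partial>(lborel \<Otimes>\<^sub>M R))
        = (\<integral>w. (\<integral>d. fst (d, w) $ k * fst (d, w) $ l * D (d, w) \<partial>lborel) \<partial>R)"
      using P.fub_eq(2)[OF int2] by simp
    also have "\<dots> = (\<integral>w. c $ k * c $ l * I0 w + V $ k $ l * Ise w \<partial>R)"
    proof (rule integral_cong_AE)
      show "(\<lambda>w. \<integral>d. fst (d, w) $ k * fst (d, w) $ l * D (d, w) \<partial>lborel) \<in> borel_measurable R"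
        using P.fub_eq(1)[OF int2] by (rule borel_measurable_integrable)
      show "(\<lambda>w. c $ k * c $ l * I0 w + V $ k $ l * Ise w) \<in> borel_measurable R"
        using I0i Isei by (simp add: borel_measurable_integrable)
      show "AE w in R. (\<integral>d. fst (d, w) $ k * fst (d, w) $ l * D (d, w) \<partial>lborel) = c $ k * c $ l * I0 w + V $ k $ l * Ise w"
        using aeP by eventually_elim simp
    qed
    also have "\<dots> = c $ k * c $ l * A0 + V $ k $ l * A1"
      using I0i Isei I0e Isee by (simp add: A0_def A1_def)
    finally show ?thesis .
  qed
  have pE: "post_E nu X y g = (\<integral>z. g z * D z \<partial>(lborel \<Otimes>\<^sub>M R)) / A0" for g
    by (simp add: post_E_def T D_def A0_def)
  have pE1: "post_E nu X y (\<lambda>z. fst z $ k) = c $ k" for k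
    unfolding pE E1 using A0pos by simp
  have pE2: "post_E nu X y (\<lambda>z. fst z $ k * fst z $ l) = c $ k * c $ l + V $ k $ l * (A1 / A0)" for k l
    unfolding pE E2 using A0pos by (simp add: field_simps)
  have pE3: "post_E nu X y (\<lambda>z. snd (snd (snd (snd (snd z))))) = A1 / A0"
    unfolding pE A1_def se_def ..
  show ?thesis
  proof (intro conjI allI)
    show "integrable (rnr_space nu) (\<lambda>z. fst z $ k * rnr_post_dens X y z)" for k
      using int1[of k] by (simp add: T D_def)
    show "integrable (rnr_space nu) (\<lambda>z. fst z $ k * fst z $ l * rnr_post_dens X y z)" for k l
      using int2[of k l] by (simp add: T D_def)
    show "(\<chi> k. post_E nu X y (\<lambda>z. fst z $ k)) = matrix_inv (transpose X ** X) *v (transpose X *v y)"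
      by (simp add: pE1 vec_eq_iff c_def V_def)
    show "(\<chi> k l. post_E nu X y (\<lambda>z. fst z $ k * fst z $ l)
                  - post_E nu X y (\<lambda>z. fst z $ k) * post_E nu X y (\<lambda>z. fst z $ l))
            = post_E nu X y (\<lambda>z. snd (snd (snd (snd (snd z))))) *\<^sub>R matrix_inv (transpose X ** X)"
      by (simp add: pE1 pE2 pE3 vec_eq_iff V_def algebra_simps)
  qed
qed
end
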